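(* For the hypercube $Q_n$: $str(Q_2)\ge6$, $str(Q_3)\ge11$, $str(Q_4)\ge21$, and $str(Q_n)\ge 2^n+4n-12$ for all $n\ge5$.
   Context: $Q_n$ is the $n$-dimensional hypercube (vertex set $\mathbb Z_2^n$, adjacency iff differing in exactly one coordinate), of order $2^n$. For a graph $G$ of order $p$, a numbering is a bijection $f:V(G)\to[1,p]$; $str_f(G)=\max\{f(u)+f(v): uv\in E(G)\}$ and $str(G)=\min_f str_f(G)$. *)

theory Defs
  imports Main
begin

definition hypercube_vertices :: "nat \<Rightarrow> bool list set" where
  "hypercube_vertices n = {xs. length xs = n}"

definition hypercube_adj :: "bool list \<Rightarrow> bool list \<Rightarrow> bool" where
  "hypercube_adj u v \<longleftrightarrow> length u = length v \<and> card {i. i < length u \<and> u ! i \<noteq> v ! i} = 1"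

definition numberings :: "'a set \<Rightarrow> ('a \<Rightarrow> nat) set" where
  "numberings V = {f. bij_betw f V {1..card V}}"

definition strength_f :: "'a set \<Rightarrow> ('a \<Rightarrow> 'a \<Rightarrow> bool) \<Rightarrow> ('a \<Rightarrow> nat) \<Rightarrow> nat" where
  "strength_f V E f = Max {f u + f v | u v. u \<in> V \<and> v \<in> V \<and> E u v}"

definition strength :: "'a set \<Rightarrow> ('a \<Rightarrow> 'a \<Rightarrow> bool) \<Rightarrow> nat" where
  "strength V E = Min (strength_f V E ` numberings V)"

definition str_hypercube :: "nat \<Rightarrow> nat" where
  "str_hypercube n = strength (hypercube_vertices n) hypercube_adj"

end

theory Submission
  imports Defs
begin

definition D :: "bool list \<Rightarrow> bool list \<Rightarrow> nat set" where
  "D x y = {i. i < length x \<and> x!i \<noteq> y!i}"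

lemma adj_D: "hypercube_adj u v \<longleftrightarrow> length u = length v \<and> card (D u v) = 1"
  by (simp add: hypercube_adj_def D_def)

lemma D_fin[simp]: "finite (D x y)" by (simp add: D_def)

lemma D_sub: "D x y \<subseteq> {..<length x}" by (auto simp: D_def)

lemma D_sym: "length x = length y \<Longrightarrow> D x y = D y x" by (auto simp: D_def)

lemma D_trans: "length x = length y \<Longrightarrow> length y = length z \<Longrightarrow>
   D x z = (D x y - D y z) \<union> (D y z - D x y)"
  by (auto simp: D_def)

lemma D_empty: "length x = length y \<Longrightarrow> D x y = {} \<Longrightarrow> x = y"
  by (rule nth_equalityI) (auto simp: D_def)

definition flip :: "bool list \<Rightarrow> nat \<Rightarrow> bool list" where "flip a i = a[i := (\<not> a!i)]"

lemma length_flip[simp]: "length (flip a i) = length a" by (simp add: flip_def)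

lemma D_flip: "i < length a \<Longrightarrow> D a (flip a i) = {i}"
  by (auto simp: D_def flip_def nth_list_update)

definition N :: "bool list \<Rightarrow> bool list set" where "N a = {x. hypercube_adj a x}"

lemma N_len: "x \<in> N a \<Longrightarrow> length x = length a"
  by (simp add: N_def adj_D)

lemma N_elem: assumes "x \<in> N a" obtains i where "i < length a" "D a x = {i}" "x = flip a i"
proof -
  have l: "length x = length a" and c: "card (D a x) = 1" using assms by (auto simp: N_def adj_D)
  then obtain i where i: "D a x = {i}" by (auto simp: card_Suc_eq)
  then have il: "i < length a" using D_sub by blast
  have "D x (flip a i) = (D x a - D a (flip a i)) \<union> (D a (flip a i) - D x a)"
    by (rule D_trans) (use l in simp_all)
  also have "\<dots> = {}" using D_flip[OF il] i D_sym[OF l] by auto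
  finally have "x = flip a i" using D_empty l by simp
  with il i show ?thesis using that by blast
qed

lemma flip_N: "i < length a \<Longrightarrow> flip a i \<in> N a"
  by (simp add: N_def adj_D D_flip)

lemma N_eq: "N a = flip a ` {..<length a}"
  using N_elem flip_N by (auto, blast)

lemma inj_flip: "inj_on (flip a) {..<length a}"
  by (rule inj_onI) (metis D_flip lessThan_iff singleton_inject)

lemma card_N: "card (N a) = length a"
  by (simp add: N_eq card_image inj_flip)

lemma N_fin[simp]: "finite (N a)"
  by (simp add: N_eq)

lemma common_nb:
  assumes "x \<in> N a" "x \<in> N b" "a \<noteq> b" "length a = length b"
  shows "card (D a b) = 2" "\<exists>i. D a x = {i} \<and> i \<in> D a b"
proof -
  obtain i where i: "i < length a" "D a x = {i}" "x = flip a i" using N_elem assms(1) by blast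
  obtain j where j: "j < length b" "D b x = {j}" "x = flip b j" using N_elem assms(2) by blast
  have lx: "length x = length a" using i by simp
  have e: "D a b = (D a x - D x b) \<union> (D x b - D a x)"
    by (rule D_trans) (use lx assms(4) in simp_all)
  also have "\<dots> = ({i} - {j}) \<union> ({j} - {i})" using i j D_sym[of x b] lx assms(4) by auto
  finally have e2: "D a b = ({i} - {j}) \<union> ({j} - {i})" .
  have "D a b \<noteq> {}" using D_empty assms by blast
  then have "i \<noteq> j" using e2 by auto
  then have "D a b = {i, j}" using e2 by auto
  then show "card (D a b) = 2" "\<exists>i. D a x = {i} \<and> i \<in> D a b" using \<open>i \<noteq> j\<close> i by auto
qed

lemma card_int2:
  assumes "a \<noteq> b" "length a = length b"
  shows "card (N a \<inter> N b) \<le> 2"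
proof (cases "N a \<inter> N b = {}")
  case True then show ?thesis by simp
next
  case False
  then obtain x where "x \<in> N a" "x \<in> N b" by auto
  then have c: "card (D a b) = 2" using common_nb assms by blast
  have "N a \<inter> N b \<subseteq> flip a ` D a b"
  proof
    fix y assume y: "y \<in> N a \<inter> N b"
    then obtain i where "D a y = {i}" "i \<in> D a b" using common_nb assms by blast
    moreover obtain i' where "D a y = {i'}" "y = flip a i'" using N_elem y by blast
    ultimately show "y \<in> flip a ` D a b" by auto
  qed
  then have "card (N a \<inter> N b) \<le> card (flip a ` D a b)" by (intro card_mono) auto
  also have "\<dots> \<le> card (D a b)" by (rule card_image_le) simp
  finally show ?thesis using c by simp
qed

lemma tri:
  assumes "a \<noteq> b" "a \<noteq> c" "b \<noteq> c" "length a = length b" "length a = length c"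
    and "N a \<inter> N b \<noteq> {}" "N a \<inter> N c \<noteq> {}" "N b \<inter> N c \<noteq> {}"
  shows "N a \<inter> N b \<inter> N c \<noteq> {}"
proof -
  have ab: "card (D a b) = 2" using common_nb assms by blast
  have ac: "card (D a c) = 2" using common_nb assms by blast
  have bc: "card (D b c) = 2" using common_nb assms by (metis disjoint_iff)
  have e: "D b c = (D b a - D a c) \<union> (D a c - D b a)" by (rule D_trans) (use assms in simp_all)
  have "D a b \<inter> D a c \<noteq> {}"
  proof
    assume h: "D a b \<inter> D a c = {}"
    then have "D b c = D a b \<union> D a c" using e D_sym[of a b] assms by auto
    then have "card (D b c) = 4" using ab ac h card_Un_disjoint[of "D a b" "D a c"] by simp
    with bc show False by simp
  qed
  then obtain k where k: "k \<in> D a b" "k \<in> D a c" by auto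
  have kl: "k < length a" using k D_sub by blast
  define z where "z = flip a k"
  have za: "z \<in> N a" using flip_N kl z_def by simp
  have Daz: "D a z = {k}" using D_flip kl z_def by simp
  have zb: "z \<in> N b"
  proof -
    have "D b z = (D b a - D a z) \<union> (D a z - D b a)" by (rule D_trans) (use assms z_def in simp_all)
    also have "\<dots> = D a b - {k}" using Daz k D_sym[of a b] assms by auto
    finally have "card (D b z) = 1" using ab k by simp
    then show ?thesis using assms z_def by (simp add: N_def adj_D)
  qed
  have zc: "z \<in> N c"
  proof -
    have "D c z = (D c a - D a z) \<union> (D a z - D c a)" by (rule D_trans) (use assms z_def in simp_all)
    also have "\<dots> = D a c - {k}" using Daz k D_sym[of a c] assms by auto
    finally have "card (D c z) = 1" using ac k by simp
    then show ?thesis using assms z_def by (simp add: N_def adj_D)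
  qed
  show ?thesis using za zb zc by blast
qed


lemma V_fin: "finite (hypercube_vertices n)"
  using finite_lists_length_eq[of "UNIV::bool set" n] by (simp add: hypercube_vertices_def)

lemma V_card: "card (hypercube_vertices n) = 2^n"
  using card_lists_length_eq[of "UNIV::bool set" n] by (simp add: hypercube_vertices_def)

lemma N_sub_V: "a \<in> hypercube_vertices n \<Longrightarrow> N a \<subseteq> hypercube_vertices n"
  by (auto simp: hypercube_vertices_def dest: N_len)

lemma key:
  fixes f :: "bool list \<Rightarrow> nat"
  assumes f: "bij_betw f V {1..card V}" and V: "V = hypercube_vertices n"
    and A: "A \<subseteq> V" "A \<noteq> {}" and t: "\<And>a. a \<in> A \<Longrightarrow> f a \<ge> t" and n: "n \<ge> 1"
  shows "strength_f V hypercube_adj f \<ge> t + card (\<Union>a\<in>A. N a)"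
proof -
  let ?U = "\<Union>a\<in>A. N a"
  have UV: "?U \<subseteq> V"
  proof (rule UN_least)
    fix a assume "a \<in> A"
    then have "a \<in> hypercube_vertices n" using A(1) V by auto
    then show "N a \<subseteq> V" using N_sub_V V by simp
  qed
  have finV: "finite V" using V V_fin by simp
  have finU: "finite ?U" using finite_subset[OF UV finV] .
  obtain a0 where a0: "a0 \<in> A" using A by blast
  then have "length a0 = n" using A V by (auto simp: hypercube_vertices_def)
  then have "card (N a0) \<noteq> 0" using card_N n by simp
  then have "N a0 \<noteq> {}" by auto
  then have Une: "?U \<noteq> {}" using a0 by blast
  have inj: "inj_on f ?U" using inj_on_subset[OF bij_betw_imp_inj_on[OF f] UV] .
  have fV: "f ` V = {1..card V}" using f by (simp add: bij_betw_def)
  have fU0: "f ` ?U \<subseteq> {1..card V}" using image_mono[OF UV, of f] fV by (simp only:)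
  let ?M = "Max (f ` ?U)"
  have finfU: "finite (f ` ?U)" using finU by (rule finite_imageI)
  have "?M \<in> f ` ?U" using finfU Une by simp
  then obtain w where w: "w \<in> ?U" "f w = ?M" by (metis imageE)
  have sub: "f ` ?U \<subseteq> {1..?M}"
  proof
    fix y assume y: "y \<in> f ` ?U"
    have "y \<le> ?M" using Max_ge[OF finfU y] .
    moreover have "1 \<le> y" using subsetD[OF fU0 y] by simp
    ultimately show "y \<in> {1..?M}" by simp
  qed
  have "card (f ` ?U) \<le> card {1..?M}" using card_mono[OF finite_atLeastAtMost sub] .
  then have "card (f ` ?U) \<le> ?M" by simp
  then have cU: "card ?U \<le> f w" using card_image[OF inj] w by simp
  from w obtain a where a: "a \<in> A" "w \<in> N a" by auto
  have adj: "hypercube_adj a w" using a N_def by simp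
  let ?S = "{f u + f v | u v. u \<in> V \<and> v \<in> V \<and> hypercube_adj u v}"
  have aV: "a \<in> V" using a A by blast
  have wV: "w \<in> V" using w UV by blast
  have mem: "f a + f w \<in> ?S" using aV wV adj by blast
  have "?S \<subseteq> (\<lambda>(u,v). f u + f v) ` (V \<times> V)"
  proof
    fix x assume "x \<in> ?S"
    then obtain u v where "x = f u + f v" "u \<in> V" "v \<in> V" by blast
    then show "x \<in> (\<lambda>(u,v). f u + f v) ` (V \<times> V)" by (intro image_eqI[of _ _ "(u,v)"]) auto
  qed
  then have finS: "finite ?S" using finite_subset finite_imageI finite_cartesian_product[OF finV finV] by blast
  have "f a + f w \<le> Max ?S" using Max_ge[OF finS mem] .
  then show ?thesis using t[OF a(1)] cU unfolding strength_f_def by simp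
qed

lemma str_bound:
  assumes "\<And>f. bij_betw f (hypercube_vertices n) {1..2^n} \<Longrightarrow>
             strength_f (hypercube_vertices n) hypercube_adj f \<ge> B"
  shows "str_hypercube n \<ge> B"
proof -
  let ?V = "hypercube_vertices n"
  have finV: "finite ?V" by (rule V_fin)
  have cV: "card ?V = 2^n" by (rule V_card)
  obtain h where h: "bij_betw h {1..card ?V} ?V" using ex_bij_betw_nat_finite_1[OF finV] by blast
  have "inv_into {1..card ?V} h \<in> numberings ?V"
    using bij_betw_inv_into[OF h] by (simp add: numberings_def)
  then have ne: "strength_f ?V hypercube_adj ` numberings ?V \<noteq> {}" by blast
  have sub: "strength_f ?V hypercube_adj ` numberings ?V \<subseteq> insert (Max {}) {..2 * card ?V}"
  proof
    fix y assume "y \<in> strength_f ?V hypercube_adj ` numberings ?V"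
    then obtain f where f: "bij_betw f ?V {1..card ?V}" and y: "y = strength_f ?V hypercube_adj f"
      by (auto simp: numberings_def)
    let ?S = "{f u + f v | u v. u \<in> ?V \<and> v \<in> ?V \<and> hypercube_adj u v}"
    have le: "?S \<subseteq> {..2 * card ?V}"
    proof
      fix x assume "x \<in> ?S"
      then obtain u v where "x = f u + f v" "u \<in> ?V" "v \<in> ?V" by blast
      moreover have "\<And>u. u \<in> ?V \<Longrightarrow> f u \<le> card ?V" using f by (auto simp: bij_betw_def)
      ultimately have "f u \<le> card ?V" "f v \<le> card ?V" "x = f u + f v" by auto
      then show "x \<in> {..2 * card ?V}" by simp
    qed
    show "y \<in> insert (Max {}) {..2 * card ?V}"
    proof (cases "?S = {}")
      case True
      have "y = Max ?S" using y by (simp only: strength_f_def)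
      then have "y = Max {}" using True by (simp only:)
      then show ?thesis by simp
    next
      case False
      have "Max ?S \<le> 2 * card ?V" using le False finite_subset[OF le] by (simp add: Max_le_iff subset_iff)
      then show ?thesis using y by (simp add: strength_f_def)
    qed
  qed
  have fin: "finite (strength_f ?V hypercube_adj ` numberings ?V)" using sub finite_subset by blast
  have "\<forall>x \<in> strength_f ?V hypercube_adj ` numberings ?V. B \<le> x"
    using assms cV by (auto simp: numberings_def)
  then show ?thesis using fin ne by (simp add: str_hypercube_def strength_def Min_ge_iff)
qed

lemma topk:
  assumes f: "bij_betw f V {1..p}" and "k \<le> p"
  shows "card {a\<in>V. f a \<ge> p+1-k} = k"
proof -
  have "f ` {a\<in>V. f a \<ge> p+1-k} = {p+1-k..p}"
  proof
    show "f ` {a\<in>V. f a \<ge> p+1-k} \<subseteq> {p+1-k..p}" using f by (auto simp: bij_betw_def)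
    show "{p+1-k..p} \<subseteq> f ` {a\<in>V. f a \<ge> p+1-k}"
    proof
      fix y assume y: "y \<in> {p+1-k..p}"
      then have "y \<in> f ` V" using f assms(2) by (auto simp: bij_betw_def)
      then show "y \<in> f ` {a\<in>V. f a \<ge> p+1-k}" using y by auto
    qed
  qed
  then have "bij_betw f {a\<in>V. f a \<ge> p+1-k} {p+1-k..p}" using bij_betw_subset[OF f] by auto
  then show ?thesis using bij_betw_same_card assms(2) by fastforce
qed


lemma un: "finite X \<Longrightarrow> finite Y \<Longrightarrow> int (card (X \<union> Y)) = int (card X) + int (card Y) - int (card (X \<inter> Y))"
  using card_Un_Int[of X Y] by simp

lemma zero12:
  fixes ab ac ad bc bd cd tabc tabd tacd tbcd q :: nat
  assumes "ab \<le> 2" "ac \<le> 2" "ad \<le> 2" "bc \<le> 2" "bd \<le> 2" "cd \<le> 2"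
   "ab \<noteq> 0 \<and> ac \<noteq> 0 \<and> bc \<noteq> 0 \<longrightarrow> tabc \<noteq> 0"
   "ab \<noteq> 0 \<and> ad \<noteq> 0 \<and> bd \<noteq> 0 \<longrightarrow> tabd \<noteq> 0"
   "ac \<noteq> 0 \<and> ad \<noteq> 0 \<and> cd \<noteq> 0 \<longrightarrow> tacd \<noteq> 0"
   "bc \<noteq> 0 \<and> bd \<noteq> 0 \<and> cd \<noteq> 0 \<longrightarrow> tbcd \<noteq> 0"
   "tabc \<le> ab" "tabc \<le> ac" "tabc \<le> bc"
   "tabd \<le> ab" "tabd \<le> ad" "tabd \<le> bd"
   "tacd \<le> ac" "tacd \<le> ad" "tacd \<le> cd"
   "tbcd \<le> bc" "tbcd \<le> bd" "tbcd \<le> cd"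
   "q \<le> tabc" "q \<le> tabd" "q \<le> tacd" "q \<le> tbcd"
   and z: "ab = 0"
  shows "ab + ac + ad + bc + bd + cd + q \<le> 9 + tabc + tabd + tacd + tbcd"
proof (cases "ac \<noteq> 0 \<and> ad \<noteq> 0 \<and> bc \<noteq> 0 \<and> bd \<noteq> 0 \<and> cd \<noteq> 0")
  case True
  then have "tacd \<noteq> 0" "tbcd \<noteq> 0" using assms(9,10) by auto
  then show ?thesis using assms by linarith
next
  case False
  then have "ac + ad + bc + bd + cd \<le> 8" using assms(2-6) by auto
  then show ?thesis using assms by linarith
qed

lemma arith4:
  fixes c12 c13 c14 c23 c24 c34 t123 t124 t134 t234 q :: nat
  assumes "c12 \<le> 2" "c13 \<le> 2" "c14 \<le> 2" "c23 \<le> 2" "c24 \<le> 2" "c34 \<le> 2"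
   "c12 \<noteq> 0 \<and> c13 \<noteq> 0 \<and> c23 \<noteq> 0 \<longrightarrow> t123 \<noteq> 0"
   "c12 \<noteq> 0 \<and> c14 \<noteq> 0 \<and> c24 \<noteq> 0 \<longrightarrow> t124 \<noteq> 0"
   "c13 \<noteq> 0 \<and> c14 \<noteq> 0 \<and> c34 \<noteq> 0 \<longrightarrow> t134 \<noteq> 0"
   "c23 \<noteq> 0 \<and> c24 \<noteq> 0 \<and> c34 \<noteq> 0 \<longrightarrow> t234 \<noteq> 0"
   "t123 \<le> c12" "t123 \<le> c13" "t123 \<le> c23"
   "t124 \<le> c12" "t124 \<le> c14" "t124 \<le> c24"
   "t134 \<le> c13" "t134 \<le> c14" "t134 \<le> c34"
   "t234 \<le> c23" "t234 \<le> c24" "t234 \<le> c34"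
   "q \<le> t123" "q \<le> t124" "q \<le> t134" "q \<le> t234"
  shows "c12 + c13 + c14 + c23 + c24 + c34 + q \<le> 9 + t123 + t124 + t134 + t234"
proof (cases "c12 \<noteq> 0 \<and> c13 \<noteq> 0 \<and> c14 \<noteq> 0 \<and> c23 \<noteq> 0 \<and> c24 \<noteq> 0 \<and> c34 \<noteq> 0")
  case True
  then have "t123 \<noteq> 0" "t124 \<noteq> 0" "t134 \<noteq> 0" "t234 \<noteq> 0" using assms(7-10) by auto
  then show ?thesis using assms by linarith
next
  case False
  then consider "c12 = 0" | "c13 = 0" | "c14 = 0" | "c23 = 0" | "c24 = 0" | "c34 = 0" by blast
  then show ?thesis
  proof cases
    case 1 then show ?thesis by (rule zero12[OF assms])
  next
    case 2
    have "c13 + c12 + c14 + c23 + c34 + c24 + q \<le> 9 + t123 + t134 + t124 + t234"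
      by (rule zero12[where ab=c13 and ac=c12 and ad=c14 and bc=c23 and bd=c34 and cd=c24
           and tabc=t123 and tabd=t134 and tacd=t124 and tbcd=t234]) (use assms 2 in auto)
    then show ?thesis by linarith
  next
    case 3
    have "c14 + c13 + c12 + c34 + c24 + c23 + q \<le> 9 + t134 + t124 + t123 + t234"
      by (rule zero12[where ab=c14 and ac=c13 and ad=c12 and bc=c34 and bd=c24 and cd=c23
           and tabc=t134 and tabd=t124 and tacd=t123 and tbcd=t234]) (use assms 3 in auto)
    then show ?thesis by linarith
  next
    case 4
    have "c23 + c12 + c24 + c13 + c34 + c14 + q \<le> 9 + t123 + t234 + t124 + t134"
      by (rule zero12[where ab=c23 and ac=c12 and ad=c24 and bc=c13 and bd=c34 and cd=c14
           and tabc=t123 and tabd=t234 and tacd=t124 and tbcd=t134]) (use assms 4 in auto)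
    then show ?thesis by linarith
  next
    case 5
    have "c24 + c12 + c23 + c14 + c34 + c13 + q \<le> 9 + t124 + t234 + t123 + t134"
      by (rule zero12[where ab=c24 and ac=c12 and ad=c23 and bc=c14 and bd=c34 and cd=c13
           and tabc=t124 and tabd=t234 and tacd=t123 and tbcd=t134]) (use assms 5 in auto)
    then show ?thesis by linarith
  next
    case 6
    have "c34 + c13 + c23 + c14 + c24 + c12 + q \<le> 9 + t134 + t234 + t123 + t124"
      by (rule zero12[where ab=c34 and ac=c13 and ad=c23 and bc=c14 and bd=c24 and cd=c12
           and tabc=t134 and tabd=t234 and tacd=t123 and tbcd=t124]) (use assms 6 in auto)
    then show ?thesis by linarith
  qed
qed

lemma union4:
  assumes d: "a \<noteq> b" "a \<noteq> c" "a \<noteq> d" "b \<noteq> c" "b \<noteq> d" "c \<noteq> d"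
    and l: "length a = n" "length b = n" "length c = n" "length d = n"
  shows "int (card (N a \<union> N b \<union> N c \<union> N d)) \<ge> 4 * int n - 9"
proof -
  let ?A = "N a" and ?B = "N b" and ?C = "N c" and ?E = "N d"
  have f: "finite ?A" "finite ?B" "finite ?C" "finite ?E" by simp_all
  have e1: "(?A \<union> ?B \<union> ?C) \<inter> ?E = ((?A \<inter> ?E) \<union> (?B \<inter> ?E)) \<union> (?C \<inter> ?E)" by blast
  have e2: "((?A \<inter> ?E) \<union> (?B \<inter> ?E)) \<inter> (?C \<inter> ?E) = (?A \<inter> ?C \<inter> ?E) \<union> (?B \<inter> ?C \<inter> ?E)" by blast
  have e3: "(?A \<inter> ?C \<inter> ?E) \<inter> (?B \<inter> ?C \<inter> ?E) = ?A \<inter> ?B \<inter> ?C \<inter> ?E" by blast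
  have e4: "(?A \<inter> ?E) \<inter> (?B \<inter> ?E) = ?A \<inter> ?B \<inter> ?E" by blast
  have e5: "(?A \<union> ?B) \<inter> ?C = (?A \<inter> ?C) \<union> (?B \<inter> ?C)" by blast
  have e6: "(?A \<inter> ?C) \<inter> (?B \<inter> ?C) = ?A \<inter> ?B \<inter> ?C" by blast
  have s1: "int (card (?A \<union> ?B \<union> ?C \<union> ?E)) = int (card (?A \<union> ?B \<union> ?C)) + int (card ?E)
      - int (card (((?A \<inter> ?E) \<union> (?B \<inter> ?E)) \<union> (?C \<inter> ?E)))"
    using un[of "?A \<union> ?B \<union> ?C" ?E] e1 by simp
  have s2: "int (card (((?A \<inter> ?E) \<union> (?B \<inter> ?E)) \<union> (?C \<inter> ?E))) =
     int (card ((?A \<inter> ?E) \<union> (?B \<inter> ?E))) + int (card (?C \<inter> ?E)) - int (card ((?A \<inter> ?C \<inter> ?E) \<union> (?B \<inter> ?C \<inter> ?E)))"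
    using un[of "(?A \<inter> ?E) \<union> (?B \<inter> ?E)" "?C \<inter> ?E"] e2 by simp
  have s3: "int (card ((?A \<inter> ?C \<inter> ?E) \<union> (?B \<inter> ?C \<inter> ?E))) = int (card (?A \<inter> ?C \<inter> ?E)) + int (card (?B \<inter> ?C \<inter> ?E)) - int (card (?A \<inter> ?B \<inter> ?C \<inter> ?E))"
    using un[of "?A \<inter> ?C \<inter> ?E" "?B \<inter> ?C \<inter> ?E"] e3 by simp
  have s4: "int (card ((?A \<inter> ?E) \<union> (?B \<inter> ?E))) = int (card (?A \<inter> ?E)) + int (card (?B \<inter> ?E)) - int (card (?A \<inter> ?B \<inter> ?E))"
    using un[of "?A \<inter> ?E" "?B \<inter> ?E"] e4 by simp
  have s5: "int (card (?A \<union> ?B \<union> ?C)) = int (card (?A \<union> ?B)) + int (card ?C) - int (card ((?A \<inter> ?C) \<union> (?B \<inter> ?C)))"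
    using un[of "?A \<union> ?B" ?C] e5 by simp
  have s6: "int (card ((?A \<inter> ?C) \<union> (?B \<inter> ?C))) = int (card (?A \<inter> ?C)) + int (card (?B \<inter> ?C)) - int (card (?A \<inter> ?B \<inter> ?C))"
    using un[of "?A \<inter> ?C" "?B \<inter> ?C"] e6 by simp
  have s7: "int (card (?A \<union> ?B)) = int (card ?A) + int (card ?B) - int (card (?A \<inter> ?B))"
    using un[of ?A ?B] by simp
  have cN: "card ?A = n" "card ?B = n" "card ?C = n" "card ?E = n" using card_N l by auto
  have p: "card (?A \<inter> ?B) \<le> 2" "card (?A \<inter> ?C) \<le> 2" "card (?A \<inter> ?E) \<le> 2"
     "card (?B \<inter> ?C) \<le> 2" "card (?B \<inter> ?E) \<le> 2" "card (?C \<inter> ?E) \<le> 2"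
    using card_int2 d l by auto
  have pos: "\<And>X Y. finite X \<Longrightarrow> card X \<noteq> 0 \<longleftrightarrow> X \<noteq> {}" by auto
  have t: "card (?A \<inter> ?B) \<noteq> 0 \<and> card (?A \<inter> ?C) \<noteq> 0 \<and> card (?B \<inter> ?C) \<noteq> 0 \<longrightarrow> card (?A \<inter> ?B \<inter> ?C) \<noteq> 0"
          "card (?A \<inter> ?B) \<noteq> 0 \<and> card (?A \<inter> ?E) \<noteq> 0 \<and> card (?B \<inter> ?E) \<noteq> 0 \<longrightarrow> card (?A \<inter> ?B \<inter> ?E) \<noteq> 0"
          "card (?A \<inter> ?C) \<noteq> 0 \<and> card (?A \<inter> ?E) \<noteq> 0 \<and> card (?C \<inter> ?E) \<noteq> 0 \<longrightarrow> card (?A \<inter> ?C \<inter> ?E) \<noteq> 0"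
          "card (?B \<inter> ?C) \<noteq> 0 \<and> card (?B \<inter> ?E) \<noteq> 0 \<and> card (?C \<inter> ?E) \<noteq> 0 \<longrightarrow> card (?B \<inter> ?C \<inter> ?E) \<noteq> 0"
    using tri[of a b c] tri[of a b d] tri[of a c d] tri[of b c d] d l
    by (simp_all add: Int_assoc)
  have m: "card (?A \<inter> ?B \<inter> ?C) \<le> card (?A \<inter> ?B)" "card (?A \<inter> ?B \<inter> ?C) \<le> card (?A \<inter> ?C)" "card (?A \<inter> ?B \<inter> ?C) \<le> card (?B \<inter> ?C)"
     "card (?A \<inter> ?B \<inter> ?E) \<le> card (?A \<inter> ?B)" "card (?A \<inter> ?B \<inter> ?E) \<le> card (?A \<inter> ?E)" "card (?A \<inter> ?B \<inter> ?E) \<le> card (?B \<inter> ?E)"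
     "card (?A \<inter> ?C \<inter> ?E) \<le> card (?A \<inter> ?C)" "card (?A \<inter> ?C \<inter> ?E) \<le> card (?A \<inter> ?E)" "card (?A \<inter> ?C \<inter> ?E) \<le> card (?C \<inter> ?E)"
     "card (?B \<inter> ?C \<inter> ?E) \<le> card (?B \<inter> ?C)" "card (?B \<inter> ?C \<inter> ?E) \<le> card (?B \<inter> ?E)" "card (?B \<inter> ?C \<inter> ?E) \<le> card (?C \<inter> ?E)"
     "card (?A \<inter> ?B \<inter> ?C \<inter> ?E) \<le> card (?A \<inter> ?B \<inter> ?C)" "card (?A \<inter> ?B \<inter> ?C \<inter> ?E) \<le> card (?A \<inter> ?B \<inter> ?E)"
     "card (?A \<inter> ?B \<inter> ?C \<inter> ?E) \<le> card (?A \<inter> ?C \<inter> ?E)" "card (?A \<inter> ?B \<inter> ?C \<inter> ?E) \<le> card (?B \<inter> ?C \<inter> ?E)"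
    by (auto intro!: card_mono)
  have "card (?A \<inter> ?B) + card (?A \<inter> ?C) + card (?A \<inter> ?E) + card (?B \<inter> ?C) + card (?B \<inter> ?E) + card (?C \<inter> ?E) + card (?A \<inter> ?B \<inter> ?C \<inter> ?E) \<le> 9 + card (?A \<inter> ?B \<inter> ?C) + card (?A \<inter> ?B \<inter> ?E) + card (?A \<inter> ?C \<inter> ?E) + card (?B \<inter> ?C \<inter> ?E)"
    by (rule arith4[OF p t m])
  then show ?thesis using s1 s2 s3 s4 s5 s6 s7 cN by linarith
qed


lemma keyk:
  assumes f: "bij_betw f (hypercube_vertices n) {1..2^n}" and k: "1 \<le> k" "k \<le> 2^n" and n: "n \<ge> 1"
  shows "strength_f (hypercube_vertices n) hypercube_adj f \<ge> 2^n + 1 - k + card (\<Union>a\<in>{a\<in>hypercube_vertices n. f a \<ge> 2^n+1-k}. N a)"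
    and "card {a\<in>hypercube_vertices n. f a \<ge> 2^n+1-k} = k"
proof -
  show c: "card {a\<in>hypercube_vertices n. f a \<ge> 2^n+1-k} = k" using topk[OF f k(2)] .
  then have "{a\<in>hypercube_vertices n. f a \<ge> 2^n+1-k} \<noteq> {}" using k(1) by (metis card.empty not_one_le_zero)
  then show "strength_f (hypercube_vertices n) hypercube_adj f \<ge> 2^n + 1 - k + card (\<Union>a\<in>{a\<in>hypercube_vertices n. f a \<ge> 2^n+1-k}. N a)"
    using key[of f "hypercube_vertices n" n "{a\<in>hypercube_vertices n. f a \<ge> 2^n+1-k}" "2^n+1-k"] f n
    by (simp add: V_card)
qed

lemma len_V: "a \<in> hypercube_vertices n \<Longrightarrow> length a = n" by (simp add: hypercube_vertices_def)

lemma bnd1: assumes "n \<ge> 1" shows "str_hypercube n \<ge> 2^n + n"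
proof (rule str_bound)
  fix f :: "bool list \<Rightarrow> nat" assume f: "bij_betw f (hypercube_vertices n) {1..2^n}"
  have k: "1 \<le> (1::nat)" "1 \<le> (2::nat)^n" by simp_all
  note h = keyk[OF f k assms]
  from h(2) obtain a where A: "{a\<in>hypercube_vertices n. f a \<ge> 2^n+1-1} = {a}" by (auto simp: card_Suc_eq)
  then have "a \<in> hypercube_vertices n" by blast
  then have "card (N a) = n" using card_N len_V by simp
  then show "strength_f (hypercube_vertices n) hypercube_adj f \<ge> 2^n + n" using h(1) A by simp
qed

lemma bnd2: assumes "n \<ge> 1" shows "str_hypercube n + 3 \<ge> 2^n + 2 * n"
proof -
  have "str_hypercube n \<ge> 2^n - 1 + (2 * n - 2)"
  proof (rule str_bound)
    fix f :: "bool list \<Rightarrow> nat" assume f: "bij_betw f (hypercube_vertices n) {1..2^n}"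
    have "(2::nat) ^ 1 \<le> 2^n" using assms by (intro power_increasing) auto
    then have k: "1 \<le> (2::nat)" "2 \<le> (2::nat)^n" by simp_all
    note h = keyk[OF f k assms]
    from h(2) obtain a b where A: "{a\<in>hypercube_vertices n. f a \<ge> 2^n+1-2} = {a, b}" "a \<noteq> b"
      by (auto simp: card_Suc_eq numeral_2_eq_2)
    then have ab: "a \<in> hypercube_vertices n" "b \<in> hypercube_vertices n" by blast+
    then have c: "card (N a) = n" "card (N b) = n" using card_N len_V by auto
    have "card (N a \<inter> N b) \<le> 2" using card_int2 A(2) ab len_V by simp
    then have "card (N a \<union> N b) \<ge> 2 * n - 2" using card_Un_Int[of "N a" "N b"] c by simp
    then show "strength_f (hypercube_vertices n) hypercube_adj f \<ge> 2^n - 1 + (2 * n - 2)"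
      using h(1) A by simp
  qed
  moreover have "(2::nat) ^ 1 \<le> 2^n" using assms by (intro power_increasing) auto
  ultimately show ?thesis by simp
qed

lemma bnd4: assumes "n \<ge> 3" shows "int (str_hypercube n) \<ge> 2^n + 4 * int n - 12"
proof -
  have "str_hypercube n \<ge> 2^n - 3 + nat (4 * int n - 9)"
  proof (rule str_bound)
    fix f :: "bool list \<Rightarrow> nat" assume f: "bij_betw f (hypercube_vertices n) {1..2^n}"
    have "(2::nat) ^ 2 \<le> 2^n" using assms by (intro power_increasing) auto
    then have k: "1 \<le> (4::nat)" "4 \<le> (2::nat)^n" by simp_all
    have n1: "n \<ge> 1" using assms by simp
    note h = keyk[OF f k n1]
    from h(2) obtain a b c d where A: "{a\<in>hypercube_vertices n. f a \<ge> 2^n+1-4} = {a, b, c, d}"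
      "a \<noteq> b" "a \<noteq> c" "a \<noteq> d" "b \<noteq> c" "b \<noteq> d" "c \<noteq> d"
      by (auto simp: card_Suc_eq numeral_eq_Suc)
    then have ab: "a \<in> hypercube_vertices n" "b \<in> hypercube_vertices n" "c \<in> hypercube_vertices n" "d \<in> hypercube_vertices n" by blast+
    have "int (card (N a \<union> N b \<union> N c \<union> N d)) \<ge> 4 * int n - 9"
      using union4[OF A(2-7)] ab len_V by blast
    then have "card (N a \<union> N b \<union> N c \<union> N d) \<ge> nat (4 * int n - 9)" by linarith
    then show "strength_f (hypercube_vertices n) hypercube_adj f \<ge> 2^n - 3 + nat (4 * int n - 9)"
      using h(1) A(1) by (simp add: Un_assoc)
  qed
  moreover have "(2::nat) ^ 2 \<le> 2^n" using assms by (intro power_increasing) auto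
  ultimately have a: "int (str_hypercube n) \<ge> int (2^n - 3 + nat (4 * int n - 9))" by (simp only: of_nat_le_iff)
  have "int (2^n - 3 + nat (4 * int n - 9)) = int (2^n) - 3 + (4 * int n - 9)"
    using \<open>(2::nat) ^ 2 \<le> 2^n\<close> assms by (simp add: of_nat_diff)
  moreover have "int ((2::nat)^n) = 2^n" by simp
  ultimately show ?thesis using a by linarith
qed

theorem mainTheorem17:
  shows "str_hypercube 2 \<ge> 6 \<and> str_hypercube 3 \<ge> 11 \<and> str_hypercube 4 \<ge> 21 \<and>
         (\<forall>n::nat. n \<ge> 5 \<longrightarrow> int (str_hypercube n) \<ge> 2 ^ n + 4 * int n - 12)"
proof (intro conjI allI impI)
  show "str_hypercube 2 \<ge> 6" using bnd1[of 2] by simp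
  show "str_hypercube 3 \<ge> 11" using bnd2[of 3] by simp
  show "str_hypercube 4 \<ge> 21" using bnd2[of 4] by simp
  fix n :: nat assume "n \<ge> 5" then show "int (str_hypercube n) \<ge> 2 ^ n + 4 * int n - 12" using bnd4 by simp
qed

end
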